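(* Let $B_1,B_2$ be independent standard Brownian motions and $\vec B^*=(B_1^*,B_2^* )$ an independent copy of $(B_1,B_2)$; let $\gamma_1,\gamma_2\in[0,2)$ and $a>0$. Then $$C(a):=\int_{\mathbb R^2}\mathbb P\Big(\exists\, t,s_1,s_2\ge 0:\ B_1^*(t)-t+\gamma_1(B_1(s_1)-s_1)>x_1,\ B_2^*(t)-at+\gamma_2(B_2(s_2)-as_2)>x_2\Big)e^{x_1+ax_2}\,dx_1dx_2$$ satisfies $$C(a)\le \frac{16}{a(2-\gamma_1)(2-\gamma_2)}<\infty.$$
   Context: The parameters $t,s_1,s_2$ range independently over $[0,\infty)$. *)

theory Defs
  imports "HOL-Probability.Probability"
begin

definition std_BM :: "'a measure \<Rightarrow> (real \<Rightarrow> 'a \<Rightarrow> real) \<Rightarrow> bool" where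
  "std_BM M B \<longleftrightarrow>
     prob_space M \<and>
     (\<forall>t\<ge>0. B t \<in> borel_measurable M) \<and>
     (\<forall>\<omega>\<in>space M. B 0 \<omega> = 0) \<and>
     (\<forall>\<omega>\<in>space M. continuous_on {0..} (\<lambda>t. B t \<omega>)) \<and>
     (\<forall>s t. 0 \<le> s \<and> s < t \<longrightarrow>
        distributed M lborel (\<lambda>\<omega>. B t \<omega> - B s \<omega>)
          (\<lambda>x. ennreal (normal_density 0 (sqrt (t - s)) x))) \<and>
     (\<forall>(tt :: nat \<Rightarrow> real) n. 0 \<le> tt 0 \<and> strict_mono tt \<longrightarrow>
        prob_space.indep_vars M (\<lambda>_. borel)
          (\<lambda>i \<omega>. B (tt (Suc i)) \<omega> - B (tt i) \<omega>) {..<n})"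

definition indep_processes :: "'a measure \<Rightarrow> (real \<Rightarrow> 'a \<Rightarrow> real) list \<Rightarrow> bool" where
  "indep_processes M Xs \<longleftrightarrow>
     prob_space.indep_vars M (\<lambda>_. PiM (UNIV :: real set) (\<lambda>_. borel))
       (\<lambda>i \<omega>. \<lambda>t. (Xs ! i) t \<omega>) {..<length Xs}"

end

theory Submission
  imports Defs
begin

lemma exp_tail_int:
  fixes k a :: real assumes k: "k > 0"
  shows "(\<integral>\<^sup>+x. ennreal (exp (- k * x)) * indicator {a..} x \<partial>lborel) = ennreal (exp (- k * a) / k)"
proof -
  have "(\<integral>\<^sup>+x. ennreal (exp (- k * x)) * indicator {a..} x \<partial>lborel) = ennreal (0 - (- exp (- k * a) / k))"
  proof (rule nn_integral_FTC_atLeast)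
    show "(\<lambda>x. exp (- k * x)) \<in> borel_measurable borel" by measurable
    show "DERIV (\<lambda>x. - exp (- k * x) / k) x :> exp (- k * x)" for x
      using k by (auto intro!: derivative_eq_intros simp: field_simps)
    have "filterlim (\<lambda>x. - k * x) at_bot at_top"
    proof -
      have "LIM x at_top. k * x :> at_top"
        using k by (intro filterlim_tendsto_pos_mult_at_top[OF tendsto_const] filterlim_ident)
      then show ?thesis by (simp add: filterlim_uminus_at_top[symmetric])
    qed
    then have "((\<lambda>x. exp (- k * x)) \<longlongrightarrow> 0) at_top"
      by (rule filterlim_compose[OF exp_at_bot])
    then have "((\<lambda>x. - exp (- k * x) / k) \<longlongrightarrow> - 0 / k) at_top"
      using k by (intro tendsto_intros) auto
    then show "((\<lambda>x. - exp (- k * x) / k) \<longlongrightarrow> 0) at_top" by simp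
  qed auto
  then show ?thesis using k by simp
qed

lemma exp_head_int:
  fixes c r :: real assumes c: "c > 0"
  shows "(\<integral>\<^sup>+x. ennreal (exp (c * x)) * indicator {..r} x \<partial>lborel) = ennreal (exp (c * r) / c)"
proof -
  have "(\<integral>\<^sup>+x. ennreal (exp (c * x)) * indicator {..r} x \<partial>lborel) =
     ennreal \<bar>-1\<bar> * (\<integral>\<^sup>+x. ennreal (exp (c * (0 + -1 * x))) * indicator {..r} (0 + -1 * x) \<partial>lborel)"
    by (rule nn_integral_real_affine) auto
  also have "\<dots> = (\<integral>\<^sup>+x. ennreal (exp (- c * x)) * indicator {-r..} x \<partial>lborel)"
    by (simp, intro nn_integral_cong) (auto simp: indicator_def)
  also have "\<dots> = ennreal (exp (c * r) / c)"
    using exp_tail_int[OF c, of "-r"] by simp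
  finally show ?thesis .
qed

definition vr :: "nat \<Rightarrow> (nat \<Rightarrow> real) \<Rightarrow> real" where
  "vr n d = Max ((\<lambda>k. \<Sum>i<k. d i) ` {..n})"

lemma vr_ge: "k \<le> n \<Longrightarrow> (\<Sum>i<k. d i) \<le> vr n d"
  unfolding vr_def by (intro Max_ge) auto

lemma vr_nonneg: "0 \<le> vr n d"
  using vr_ge[of 0 n d] by simp

lemma vr_cong: "(\<And>i. i < n \<Longrightarrow> d i = d' i) \<Longrightarrow> vr n d = vr n d'"
  unfolding vr_def by (intro arg_cong[where f=Max] image_cong refl sum.cong) auto

lemma vr_Suc: "vr (Suc n) d = max 0 (d 0 + vr n (\<lambda>i. d (Suc i)))"
proof (rule antisym)
  show "vr (Suc n) d \<le> max 0 (d 0 + vr n (\<lambda>i. d (Suc i)))"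
    unfolding vr_def[of "Suc n"]
  proof (subst Max_le_iff, simp, simp, safe)
    fix k assume "k \<le> Suc n"
    show "(\<Sum>i<k. d i) \<le> max 0 (d 0 + vr n (\<lambda>i. d (Suc i)))"
    proof (cases k)
      case 0 then show ?thesis by simp
    next
      case (Suc k')
      then have "(\<Sum>i<k. d i) = d 0 + (\<Sum>i<k'. d (Suc i))"
        by (simp del: sum.lessThan_Suc add: sum.lessThan_Suc_shift)
      moreover have "(\<Sum>i<k'. d (Suc i)) \<le> vr n (\<lambda>i. d (Suc i))"
        using Suc \<open>k \<le> Suc n\<close> by (intro vr_ge) auto
      ultimately show ?thesis by simp
    qed
  qed
next
  have "vr n (\<lambda>i. d (Suc i)) \<in> (\<lambda>k. \<Sum>i<k. d (Suc i)) ` {..n}"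
    unfolding vr_def by (rule Max_in) auto
  then obtain k where k: "k \<le> n" "vr n (\<lambda>i. d (Suc i)) = (\<Sum>i<k. d (Suc i))"
    by auto
  have "d 0 + vr n (\<lambda>i. d (Suc i)) = (\<Sum>i<Suc k. d i)"
    using k by (simp del: sum.lessThan_Suc add: sum.lessThan_Suc_shift)
  also have "\<dots> \<le> vr (Suc n) d" using k by (intro vr_ge) auto
  finally show "max 0 (d 0 + vr n (\<lambda>i. d (Suc i))) \<le> vr (Suc n) d"
    using vr_nonneg by simp
qed

lemma vr_measurable:
  assumes "\<And>i. i < n \<Longrightarrow> D i \<in> borel_measurable M"
  shows "(\<lambda>\<omega>. vr n (\<lambda>i. D i \<omega>)) \<in> borel_measurable M"
  unfolding vr_def
  by (intro borel_measurable_Max borel_measurable_sum assms) auto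

lemma vr_0[simp]: "vr 0 d = 0"
  unfolding vr_def by simp

lemma (in prob_space) pair_tail:
  fixes X Y :: "'a \<Rightarrow> real"
  assumes ind: "indep_var borel X borel Y" and c: "c > 0"
    and tl: "\<And>y. emeasure M {\<omega>\<in>space M. y \<le> Y \<omega>} \<le> ennreal (exp (- c * y))"
    and mg: "(\<integral>\<^sup>+\<omega>. ennreal (exp (c * X \<omega>)) \<partial>M) \<le> 1"
  shows "emeasure M {\<omega>\<in>space M. x \<le> X \<omega> + Y \<omega>} \<le> ennreal (exp (- c * x))"
proof -
  have rvX[measurable]: "X \<in> borel_measurable M" and rvY[measurable]: "Y \<in> borel_measurable M"
    using ind by (auto dest: indep_var_rv1 indep_var_rv2)
  interpret PX: prob_space "distr M borel X" by (rule prob_space_distr) simp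
  interpret PY: prob_space "distr M borel Y" by (rule prob_space_distr) simp
  define S where "S = {p::real\<times>real. x \<le> fst p + snd p}"
  have S[measurable]: "S \<in> sets (borel \<Otimes>\<^sub>M borel)"
  proof -
    have "S = {p \<in> space (borel \<Otimes>\<^sub>M borel). x \<le> fst p + snd p}"
      by (auto simp: S_def space_pair_measure)
    also have "\<dots> \<in> sets (borel \<Otimes>\<^sub>M borel)" by measurable
    finally show ?thesis .
  qed
  have "emeasure M {\<omega>\<in>space M. x \<le> X \<omega> + Y \<omega>} =
        emeasure (distr M (borel \<Otimes>\<^sub>M borel) (\<lambda>\<omega>. (X \<omega>, Y \<omega>))) S"
  proof -
    have "(\<lambda>\<omega>. (X \<omega>, Y \<omega>)) -` S \<inter> space M = {\<omega>\<in>space M. x \<le> X \<omega> + Y \<omega>}"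
      by (auto simp: S_def)
    moreover have "emeasure (distr M (borel \<Otimes>\<^sub>M borel) (\<lambda>\<omega>. (X \<omega>, Y \<omega>))) S =
       emeasure M ((\<lambda>\<omega>. (X \<omega>, Y \<omega>)) -` S \<inter> space M)"
      by (rule emeasure_distr[OF _ S]) simp
    ultimately show ?thesis by simp
  qed
  also have "\<dots> = emeasure (distr M borel X \<Otimes>\<^sub>M distr M borel Y) S"
  proof -
    have "distr M borel X \<Otimes>\<^sub>M distr M borel Y = distr M (borel \<Otimes>\<^sub>M borel) (\<lambda>\<omega>. (X \<omega>, Y \<omega>))"
      using ind unfolding indep_var_distribution_eq by blast
    then show ?thesis by (simp only:)
  qed
  also have "\<dots> = (\<integral>\<^sup>+u. emeasure (distr M borel Y) (Pair u -` S) \<partial>distr M borel X)"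
  proof (rule PY.emeasure_pair_measure_alt)
    have "sets (distr M borel X \<Otimes>\<^sub>M distr M borel Y) = sets (borel \<Otimes>\<^sub>M borel)"
      by (intro sets_pair_measure_cong) simp_all
    then show "S \<in> sets (distr M borel X \<Otimes>\<^sub>M distr M borel Y)" using S by (simp only:)
  qed
  also have "\<dots> \<le> (\<integral>\<^sup>+u. ennreal (exp (- c * (x - u))) \<partial>distr M borel X)"
  proof (rule nn_integral_mono)
    fix u
    have "emeasure (distr M borel Y) (Pair u -` S) = emeasure M {\<omega>\<in>space M. x - u \<le> Y \<omega>}"
    proof -
      have "Pair u -` S \<in> sets borel" by (simp add: S_def)
      then have "emeasure (distr M borel Y) (Pair u -` S) = emeasure M (Y -` (Pair u -` S) \<inter> space M)"
        by (rule emeasure_distr[rotated]) simp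
      also have "Y -` (Pair u -` S) \<inter> space M = {\<omega>\<in>space M. x - u \<le> Y \<omega>}"
        by (auto simp: S_def)
      finally show ?thesis .
    qed
    also have "\<dots> \<le> ennreal (exp (- c * (x - u)))" by (rule tl)
    finally show "emeasure (distr M borel Y) (Pair u -` S) \<le> ennreal (exp (- c * (x - u)))" .
  qed
  also have "\<dots> = (\<integral>\<^sup>+\<omega>. ennreal (exp (- c * (x - X \<omega>))) \<partial>M)"
    by (subst nn_integral_distr) auto
  also have "\<dots> = (\<integral>\<^sup>+\<omega>. ennreal (exp (- c * x)) * ennreal (exp (c * X \<omega>)) \<partial>M)"
    by (intro nn_integral_cong) (simp add: ennreal_mult'[symmetric] exp_add[symmetric] algebra_simps)
  also have "\<dots> = ennreal (exp (- c * x)) * (\<integral>\<^sup>+\<omega>. ennreal (exp (c * X \<omega>)) \<partial>M)"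
    by (rule nn_integral_cmult) simp
  also have "\<dots> \<le> ennreal (exp (- c * x)) * 1"
    by (intro mult_left_mono mg) simp
  finally show ?thesis by simp
qed

lemma (in prob_space) vr_tail:
  assumes c: "c > 0"
  shows "indep_vars (\<lambda>_. borel) D {m..<m+n} \<Longrightarrow>
    (\<And>i. m \<le> i \<Longrightarrow> i < m + n \<Longrightarrow> (\<integral>\<^sup>+\<omega>. ennreal (exp (c * D i \<omega>)) \<partial>M) \<le> 1) \<Longrightarrow>
    emeasure M {\<omega>\<in>space M. x \<le> vr n (\<lambda>i. D (m + i) \<omega>)} \<le> ennreal (exp (- c * x))"
proof (induction n arbitrary: m x)
  case 0
  show ?case
  proof (cases "x \<le> 0")
    case True
    have "emeasure M {\<omega>\<in>space M. x \<le> vr 0 (\<lambda>i. D (m + i) \<omega>)} \<le> 1"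
      by (rule emeasure_le_1)
    also have "1 \<le> ennreal (exp (- c * x))"
      using True c by (simp add: mult_nonneg_nonpos)
    finally show ?thesis .
  qed simp
next
  case (Suc n)
  have rv: "\<And>i. m \<le> i \<Longrightarrow> i < m + Suc n \<Longrightarrow> D i \<in> borel_measurable M"
    using Suc.prems(1) by (auto simp: indep_vars_def)
  have ind': "indep_vars (\<lambda>_. borel) D {Suc m..<Suc m + n}"
    by (rule indep_vars_subset[OF Suc.prems(1)]) auto
  have IH: "emeasure M {\<omega>\<in>space M. y \<le> vr n (\<lambda>i. D (Suc m + i) \<omega>)} \<le> ennreal (exp (- c * y))" for y
    using Suc.IH[OF ind', of y] Suc.prems(2) by auto
  define V where "V \<omega> = vr n (\<lambda>i. D (Suc m + i) \<omega>)" for \<omega>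
  have "indep_var borel ((\<lambda>f. f m) \<circ> (\<lambda>\<omega>. restrict (\<lambda>i. D i \<omega>) {m}))
                   borel ((\<lambda>f. vr n (\<lambda>i. f (Suc m + i))) \<circ> (\<lambda>\<omega>. restrict (\<lambda>i. D i \<omega>) {Suc m..<Suc m + n}))"
  proof (intro indep_var_compose[OF indep_var_restrict[OF Suc.prems(1)]])
    show "(\<lambda>f. vr n (\<lambda>i. f (Suc m + i))) \<in> borel_measurable (Pi\<^sub>M {Suc m..<Suc m + n} (\<lambda>_. borel))"
      by (intro vr_measurable measurable_component_singleton) auto
  qed auto
  also have "((\<lambda>f. f m) \<circ> (\<lambda>\<omega>. restrict (\<lambda>i. D i \<omega>) {m})) = D m" by auto
  also have "((\<lambda>f. vr n (\<lambda>i. f (Suc m + i))) \<circ> (\<lambda>\<omega>. restrict (\<lambda>i. D i \<omega>) {Suc m..<Suc m + n})) = V"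
    by (auto simp: V_def fun_eq_iff intro!: vr_cong)
  finally have ind: "indep_var borel (D m) borel V" .
  have eq: "vr (Suc n) (\<lambda>i. D (m + i) \<omega>) = max 0 (D m \<omega> + V \<omega>)" for \<omega>
    by (simp add: vr_Suc V_def)
  show ?case
  proof (cases "x \<le> 0")
    case True
    have "emeasure M {\<omega>\<in>space M. x \<le> vr (Suc n) (\<lambda>i. D (m + i) \<omega>)} \<le> 1"
      by (rule emeasure_le_1)
    also have "1 \<le> ennreal (exp (- c * x))"
      using True c by (simp add: mult_nonneg_nonpos)
    finally show ?thesis .
  next
    case False
    then have "{\<omega>\<in>space M. x \<le> vr (Suc n) (\<lambda>i. D (m + i) \<omega>)} = {\<omega>\<in>space M. x \<le> D m \<omega> + V \<omega>}"
      using False by (simp add: eq le_max_iff_disj)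
    also have "emeasure M \<dots> \<le> ennreal (exp (- c * x))"
    proof (rule pair_tail[OF ind c])
      show "emeasure M {\<omega> \<in> space M. y \<le> V \<omega>} \<le> ennreal (exp (- c * y))" for y
        unfolding V_def by (rule IH)
      show "(\<integral>\<^sup>+\<omega>. ennreal (exp (c * D m \<omega>)) \<partial>M) \<le> 1"
        by (rule Suc.prems(2)) auto
    qed
    finally show ?thesis .
  qed
qed

lemma nn_integral_normal_density: assumes "s > 0" shows "(\<integral>\<^sup>+x. ennreal (normal_density m s x) \<partial>lborel) = 1"
proof -
  interpret prob_space "density lborel (normal_density m s)" using assms by (intro prob_space_normal_density)
  have "emeasure (density lborel (normal_density m s)) UNIV = 1"
    using emeasure_space_1 by simp
  then show ?thesis by (simp add: emeasure_density)
qed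

lemma normal_mgf_shift:
  assumes s: "s > 0"
  shows "normal_density 0 s x * exp (l * x - l\<^sup>2 * s\<^sup>2 / 2) = normal_density (l * s\<^sup>2) s x"
proof -
  have "- (x\<^sup>2 / (2 * s\<^sup>2)) + (l * x - l\<^sup>2 * s\<^sup>2 / 2) = - ((x - l * s\<^sup>2)\<^sup>2 / (2 * s\<^sup>2))"
    using s by (simp add: field_simps power2_eq_square)
  then show ?thesis
    unfolding normal_density_def by (simp add: mult.assoc exp_add[symmetric])
qed

lemma normal_mgf:
  assumes s: "s > 0"
  shows "(\<integral>\<^sup>+x. ennreal (normal_density 0 s x) * ennreal (exp (l * x - l\<^sup>2 * s\<^sup>2 / 2)) \<partial>lborel) = 1"
proof -
  have "(\<integral>\<^sup>+x. ennreal (normal_density 0 s x) * ennreal (exp (l * x - l\<^sup>2 * s\<^sup>2 / 2)) \<partial>lborel)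
      = (\<integral>\<^sup>+x. ennreal (normal_density (l * s\<^sup>2) s x) \<partial>lborel)"
    by (intro nn_integral_cong) (simp add: ennreal_mult'[symmetric] normal_mgf_shift[OF s])
  then show ?thesis using s by (simp add: nn_integral_normal_density)
qed

definition sgf :: "real \<Rightarrow> nat \<Rightarrow> (real \<Rightarrow> real) \<Rightarrow> real" where
  "sgf \<mu> n f = Max ((\<lambda>k. f (real k / 2^n) - \<mu> * (real k / 2^n)) ` {..n * 2^n})"

lemma sgf_measurable[measurable]:
  "sgf \<mu> n \<in> borel_measurable (PiM UNIV (\<lambda>_. (borel :: real measure)))"
  unfolding sgf_def by (intro borel_measurable_Max) auto

lemma sgf_ge: "k \<le> n * 2^n \<Longrightarrow> f (real k / 2^n) - \<mu> * (real k / 2^n) \<le> sgf \<mu> n f"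
  unfolding sgf_def by (intro Max_ge) auto

lemma sgf_nonneg: "f 0 = 0 \<Longrightarrow> 0 \<le> sgf \<mu> n f"
  using sgf_ge[of 0 n f \<mu>] by simp

lemma std_BM_rv: "std_BM M B \<Longrightarrow> 0 \<le> t \<Longrightarrow> B t \<in> borel_measurable M"
  unfolding std_BM_def by auto

lemma sgf_tail:
  assumes B: "std_BM M B" and mu: "\<mu> > 0"
  shows "emeasure M {\<omega>\<in>space M. x \<le> sgf \<mu> n (\<lambda>t. B t \<omega>)} \<le> ennreal (exp (- (2 * \<mu>) * x))"
proof -
  interpret prob_space M using B by (simp add: std_BM_def)
  define tt where "tt k = real k / 2^n" for k :: nat
  define h :: real where "h = 1 / 2^n"
  have h: "h > 0" by (simp add: h_def)
  have tt_Suc: "tt (Suc i) - tt i = h" for i by (simp add: tt_def h_def diff_divide_distrib[symmetric])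
  have smono: "strict_mono tt" by (auto simp: strict_mono_def tt_def divide_strict_right_mono)
  define N where "N = n * 2^n"
  define D where "D i \<omega> = B (tt (Suc i)) \<omega> - B (tt i) \<omega> - \<mu> * h" for i \<omega>
  have ind0: "indep_vars (\<lambda>_. borel) (\<lambda>i \<omega>. B (tt (Suc i)) \<omega> - B (tt i) \<omega>) {..<N}"
  proof -
    have "\<forall>tt. 0 \<le> tt 0 \<and> strict_mono tt \<longrightarrow> (\<forall>n. indep_vars (\<lambda>_. borel) (\<lambda>i \<omega>. B (tt (Suc i)) \<omega> - B (tt i) \<omega>) {..<n})"
      using B unfolding std_BM_def by blast
    then show ?thesis by (rule allE[of _ tt], elim impE) (auto simp: smono tt_def)
  qed
  have ind: "indep_vars (\<lambda>_. borel) D {0..<0+N}"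
    unfolding D_def[abs_def] using indep_vars_compose2[OF ind0, of "\<lambda>_ z. z - \<mu> * h" "\<lambda>_. borel"]
    by (simp add: atLeast0LessThan)
  have mgf: "(\<integral>\<^sup>+\<omega>. ennreal (exp ((2 * \<mu>) * D i \<omega>)) \<partial>M) \<le> 1" for i
  proof -
    have dist: "distributed M lborel (\<lambda>\<omega>. B (tt (Suc i)) \<omega> - B (tt i) \<omega>)
        (\<lambda>x. ennreal (normal_density 0 (sqrt h) x))"
      using B smono tt_Suc[of i] unfolding std_BM_def strict_mono_def
      by (metis le_less lessI of_nat_0_le_iff tt_def divide_nonneg_pos zero_less_numeral zero_less_power)
    have "(\<integral>\<^sup>+\<omega>. ennreal (exp ((2 * \<mu>) * D i \<omega>)) \<partial>M) =
      (\<integral>\<^sup>+x. ennreal (normal_density 0 (sqrt h) x) * ennreal (exp ((2*\<mu>) * x - (2*\<mu>)\<^sup>2 * (sqrt h)\<^sup>2 / 2)) \<partial>lborel)"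
      using h
      by (subst distributed_nn_integral[OF dist]) (auto simp: D_def power2_eq_square algebra_simps intro!: nn_integral_cong)
    also have "\<dots> = 1" using h by (intro normal_mgf) simp
    finally show ?thesis by simp
  qed
  have eqv: "sgf \<mu> n (\<lambda>t. B t \<omega>) = vr N (\<lambda>i. D (0 + i) \<omega>)" if \<omega>: "\<omega> \<in> space M" for \<omega>
  proof -
    have B0: "B 0 \<omega> = 0" using B \<omega> unfolding std_BM_def by auto
    have "(\<Sum>i<k. D i \<omega>) = B (tt k) \<omega> - \<mu> * tt k" for k
    proof (induction k)
      case 0 then show ?case using B0 by (simp add: tt_def)
    next
      case (Suc k) then show ?case using tt_Suc[of k] by (simp add: D_def algebra_simps)
    qed
    then show ?thesis
      unfolding sgf_def vr_def N_def tt_def by simp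
  qed
  have "emeasure M {\<omega>\<in>space M. x \<le> sgf \<mu> n (\<lambda>t. B t \<omega>)} = emeasure M {\<omega>\<in>space M. x \<le> vr N (\<lambda>i. D (0 + i) \<omega>)}"
    by (intro arg_cong[where f="emeasure M"]) (auto simp: eqv)
  also have "\<dots> \<le> ennreal (exp (- (2 * \<mu>) * x))"
    using mu by (intro vr_tail[OF _ ind] mgf) auto
  finally show ?thesis .
qed

lemma sgf_path_measurable[measurable]:
  assumes "std_BM M B"
  shows "(\<lambda>\<omega>. sgf \<mu> n (\<lambda>t. B t \<omega>)) \<in> borel_measurable M"
  unfolding sgf_def using std_BM_rv[OF assms]
  by (intro borel_measurable_Max borel_measurable_diff) auto

lemma sgf_mgf:
  assumes B: "std_BM M B" and mu: "\<mu> > 0" and th: "0 \<le> \<theta>" "\<theta> < 2 * \<mu>"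
  shows "(\<integral>\<^sup>+\<omega>. ennreal (exp (\<theta> * sgf \<mu> n (\<lambda>t. B t \<omega>))) \<partial>M) \<le> ennreal (2 * \<mu> / (2 * \<mu> - \<theta>))"
proof -
  interpret prob_space M using B by (simp add: std_BM_def)
  define S where "S \<omega> = sgf \<mu> n (\<lambda>t. B t \<omega>)" for \<omega>
  have S[measurable]: "S \<in> borel_measurable M"
    unfolding S_def using B by measurable
  show ?thesis
  proof (cases "\<theta> = 0")
    case True
    then show ?thesis using mu by (simp add: emeasure_space_1)
  next
    case False
    with th have thp: "\<theta> > 0" by simp
    have k: "2 * \<mu> - \<theta> > 0" using th by simp
    interpret PS: pair_sigma_finite lborel M
      by (simp add: pair_sigma_finite_def lborel.sigma_finite_measure_axioms sigma_finite_measure_axioms)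
    define g where "g x \<omega> = (if x \<le> S \<omega> then ennreal (exp (\<theta> * x)) else 0)" for x \<omega>
    have g[measurable]: "case_prod g \<in> borel_measurable (lborel \<Otimes>\<^sub>M M)"
      unfolding g_def[abs_def] by measurable
    have inner: "(\<integral>\<^sup>+x. g x \<omega> \<partial>lborel) = ennreal (exp (\<theta> * S \<omega>) / \<theta>)" for \<omega>
    proof -
      have "(\<integral>\<^sup>+x. g x \<omega> \<partial>lborel) = (\<integral>\<^sup>+x. ennreal (exp (\<theta> * x)) * indicator {..S \<omega>} x \<partial>lborel)"
        by (intro nn_integral_cong) (simp add: g_def indicator_def)
      also have "\<dots> = ennreal (exp (\<theta> * S \<omega>) / \<theta>)" by (rule exp_head_int[OF thp])
      finally show ?thesis .
    qed
    have "(\<integral>\<^sup>+\<omega>. ennreal (exp (\<theta> * S \<omega>)) \<partial>M) = (\<integral>\<^sup>+\<omega>. ennreal \<theta> * ennreal (exp (\<theta> * S \<omega>) / \<theta>) \<partial>M)"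
      using thp by (intro nn_integral_cong) (simp add: ennreal_mult'[symmetric])
    also have "\<dots> = ennreal \<theta> * (\<integral>\<^sup>+\<omega>. ennreal (exp (\<theta> * S \<omega>) / \<theta>) \<partial>M)"
      by (rule nn_integral_cmult) measurable
    also have "(\<integral>\<^sup>+\<omega>. ennreal (exp (\<theta> * S \<omega>) / \<theta>) \<partial>M) = (\<integral>\<^sup>+\<omega>. (\<integral>\<^sup>+x. g x \<omega> \<partial>lborel) \<partial>M)"
      by (simp add: inner)
    also have "\<dots> = (\<integral>\<^sup>+x. (\<integral>\<^sup>+\<omega>. g x \<omega> \<partial>M) \<partial>lborel)"
      by (rule PS.Fubini'[OF g])
    also have "\<dots> \<le> (\<integral>\<^sup>+x. ennreal (exp (\<theta> * x)) * indicator {..0} x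
                        + ennreal (exp (- (2 * \<mu> - \<theta>) * x)) * indicator {0..} x \<partial>lborel)"
    proof (rule nn_integral_mono)
      fix x :: real
      have "(\<integral>\<^sup>+\<omega>. g x \<omega> \<partial>M) = (\<integral>\<^sup>+\<omega>. ennreal (exp (\<theta> * x)) * indicator {\<omega>\<in>space M. x \<le> S \<omega>} \<omega> \<partial>M)"
        by (intro nn_integral_cong) (simp add: g_def indicator_def)
      also have "\<dots> = ennreal (exp (\<theta> * x)) * emeasure M {\<omega>\<in>space M. x \<le> S \<omega>}"
        by (rule nn_integral_cmult_indicator) measurable
      also have "\<dots> \<le> ennreal (exp (\<theta> * x)) * indicator {..0} x
                        + ennreal (exp (- (2 * \<mu> - \<theta>) * x)) * indicator {0..} x"
      proof (cases "x \<le> 0")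
        case True
        have "ennreal (exp (\<theta> * x)) * emeasure M {\<omega>\<in>space M. x \<le> S \<omega>} \<le> ennreal (exp (\<theta> * x)) * 1"
          by (intro mult_left_mono emeasure_le_1) simp
        also have "\<dots> \<le> ennreal (exp (\<theta> * x)) * indicator {..0} x
                        + ennreal (exp (- (2 * \<mu> - \<theta>) * x)) * indicator {0..} x"
          using True by simp
        finally show ?thesis .
      next
        case False
        have "emeasure M {\<omega>\<in>space M. x \<le> S \<omega>} \<le> ennreal (exp (- (2 * \<mu>) * x))"
          unfolding S_def by (rule sgf_tail[OF B mu])
        then have "ennreal (exp (\<theta> * x)) * emeasure M {\<omega>\<in>space M. x \<le> S \<omega>}
              \<le> ennreal (exp (\<theta> * x)) * ennreal (exp (- (2 * \<mu>) * x))"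
          by (intro mult_left_mono) simp_all
        also have "\<dots> = ennreal (exp (- (2 * \<mu> - \<theta>) * x))"
          by (simp add: ennreal_mult'[symmetric] exp_add[symmetric] algebra_simps)
        finally show ?thesis using False by simp
      qed
      finally show "(\<integral>\<^sup>+\<omega>. g x \<omega> \<partial>M) \<le> ennreal (exp (\<theta> * x)) * indicator {..0} x
                        + ennreal (exp (- (2 * \<mu> - \<theta>) * x)) * indicator {0..} x" .
    qed
    also have "\<dots> = (\<integral>\<^sup>+x. ennreal (exp (\<theta> * x)) * indicator {..0} x \<partial>lborel)
                    + (\<integral>\<^sup>+x. ennreal (exp (- (2 * \<mu> - \<theta>) * x)) * indicator {0..} x \<partial>lborel)"
      by (rule nn_integral_add) measurable
    also have "\<dots> = ennreal (1 / \<theta>) + ennreal (1 / (2 * \<mu> - \<theta>))"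
      using exp_head_int[OF thp, of 0] exp_tail_int[OF k, of 0] by simp
    also have "\<dots> = ennreal (1 / \<theta> + 1 / (2 * \<mu> - \<theta>))"
      using thp k by (simp add: ennreal_plus)
    finally have "(\<integral>\<^sup>+\<omega>. ennreal (exp (\<theta> * S \<omega>)) \<partial>M) \<le> ennreal \<theta> * ennreal (1 / \<theta> + 1 / (2 * \<mu> - \<theta>))"
      by (simp add: mult_left_mono)
    also have "\<dots> = ennreal (\<theta> * (1 / \<theta> + 1 / (2 * \<mu> - \<theta>)))"
      using thp k by (simp add: ennreal_mult)
    also have "\<theta> * (1 / \<theta> + 1 / (2 * \<mu> - \<theta>)) = 2 * \<mu> / (2 * \<mu> - \<theta>)"
      using thp k by (simp add: field_simps)
    finally show ?thesis by (simp add: S_def)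
  qed
qed

definition up :: "nat \<Rightarrow> real \<Rightarrow> real" where "up n t = real (nat \<lceil>t * 2^n\<rceil>) / 2^n"

lemma up_props:
  assumes "0 \<le> t" shows "t \<le> up n t" "up n t < t + (1/2)^n"
proof -
  have c00: "0 \<le> t * 2^n" using assms by simp
  have "t * 2^n \<le> of_int \<lceil>t * 2^n\<rceil>" by (rule le_of_int_ceiling)
  then have c0: "0 \<le> \<lceil>t * 2^n\<rceil>" using c00 by linarith
  have r: "real (nat \<lceil>t * 2^n\<rceil>) = of_int \<lceil>t * 2^n\<rceil>" using c0 by simp
  have p: "(2::real)^n > 0" by simp
  show "t \<le> up n t"
    unfolding up_def r using p by (simp add: field_simps)
  have "of_int \<lceil>t * 2^n\<rceil> < t * 2^n + 1" by linarith
  then show "up n t < t + (1/2)^n"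
    unfolding up_def r using p by (simp add: field_simps power_one_over)
qed

lemma up_idx: assumes "0 \<le> t" "t \<le> real n" shows "nat \<lceil>t * 2^n\<rceil> \<le> n * 2^n"
proof -
  have "\<lceil>t * 2^n\<rceil> \<le> \<lceil>real n * 2^n\<rceil>"
    using assms by (intro ceiling_mono mult_right_mono) auto
  also have "\<lceil>real n * 2^n\<rceil> = int (n * 2^n)" by (metis ceiling_of_nat of_nat_mult of_nat_numeral of_nat_power)
  finally show ?thesis by linarith
qed

lemma cont_delta:
  fixes f :: "real \<Rightarrow> real" and t :: real
  assumes "continuous_on {0..} f" "0 \<le> t" "e > 0"
  shows "\<exists>d>0. \<forall>y\<ge>0. \<bar>y - t\<bar> < d \<longrightarrow> \<bar>f y - f t\<bar> < (e::real)"
proof -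
  have "\<forall>x\<in>{0..}. \<forall>e>0. \<exists>d>0. \<forall>x'\<in>{0..}. dist x' x < d \<longrightarrow> dist (f x') (f x) < e"
    using assms(1) by (simp add: continuous_on_iff)
  then obtain d where "d > 0" "\<And>x'. x' \<in> {0..} \<Longrightarrow> dist x' t < d \<Longrightarrow> dist (f x') (f t) < e"
    using assms(2,3) by (meson atLeast_iff)
  then show ?thesis by (intro exI[of _ d]) (auto simp: dist_real_def)
qed

lemma choose_n:
  assumes "d > 0" shows "\<exists>n. (1/2::real)^n < d \<and> T \<le> real n"
proof -
  obtain n1 where n1: "(1/2::real)^n1 < d" using real_arch_pow_inv[OF assms, of "1/2"] by auto
  obtain n2 where n2: "T \<le> real n2" using real_arch_simple by auto
  define n where "n = max n1 n2"
  have "(1/2::real)^n \<le> (1/2)^n1" unfolding n_def by (intro power_decreasing) auto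
  then have A: "(1/2::real)^n < d" using n1 by linarith
  have "T \<le> real n" using n2 unfolding n_def by simp
  then show ?thesis using A by blast
qed

lemma density:
  fixes f1 g1 f2 g2 :: "real \<Rightarrow> real"
  assumes c: "continuous_on {0..} f1" "continuous_on {0..} g1" "continuous_on {0..} f2" "continuous_on {0..} g2"
    and gam: "0 \<le> \<gamma>1" "\<gamma>1 \<le> 2" "0 \<le> \<gamma>2" "\<gamma>2 \<le> 2" and a: "0 < a"
    and ts: "0 \<le> t" "0 \<le> s1" "0 \<le> s2"
    and P1: "f1 t - t + \<gamma>1 * (g1 s1 - s1) > x1"
    and P2: "f2 t - a * t + \<gamma>2 * (g2 s2 - a * s2) > x2"
  shows "\<exists>n. \<exists>k1\<le>n*2^n. \<exists>k2\<le>n*2^n. \<exists>k3\<le>n*2^n.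
     f1 (real k1/2^n) - real k1/2^n + \<gamma>1 * (g1 (real k2/2^n) - real k2/2^n) > x1 \<and>
     f2 (real k1/2^n) - a * (real k1/2^n) + \<gamma>2 * (g2 (real k3/2^n) - a * (real k3/2^n)) > x2"
proof -
  define e1 where "e1 = f1 t - t + \<gamma>1 * (g1 s1 - s1) - x1"
  define e2 where "e2 = f2 t - a * t + \<gamma>2 * (g2 s2 - a * s2) - x2"
  have e: "e1 > 0" "e2 > 0" using P1 P2 by (auto simp: e1_def e2_def)
  define \<eta> where "\<eta> = min e1 e2 / (7 * (1 + a))"
  have eta: "\<eta> > 0" using e a by (simp add: \<eta>_def)
  have eta0: "7 * (1 + a) * \<eta> \<le> e1" "7 * (1 + a) * \<eta> \<le> e2" using e a by (auto simp: \<eta>_def)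
  then have eta1: "7 * \<eta> + 7 * (a * \<eta>) \<le> e1" "7 * \<eta> + 7 * (a * \<eta>) \<le> e2"
    by (simp_all add: algebra_simps)
  have aeta: "a * \<eta> \<ge> 0" using a eta by simp
  obtain d1 where d1: "d1 > 0" "\<And>y. y \<ge> 0 \<Longrightarrow> \<bar>y - t\<bar> < d1 \<Longrightarrow> \<bar>f1 y - f1 t\<bar> < \<eta>"
    using cont_delta[OF c(1) ts(1) eta] by auto
  obtain d2 where d2: "d2 > 0" "\<And>y. y \<ge> 0 \<Longrightarrow> \<bar>y - s1\<bar> < d2 \<Longrightarrow> \<bar>g1 y - g1 s1\<bar> < \<eta>"
    using cont_delta[OF c(2) ts(2) eta] by auto
  obtain d3 where d3: "d3 > 0" "\<And>y. y \<ge> 0 \<Longrightarrow> \<bar>y - t\<bar> < d3 \<Longrightarrow> \<bar>f2 y - f2 t\<bar> < \<eta>"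
    using cont_delta[OF c(3) ts(1) eta] by auto
  obtain d4 where d4: "d4 > 0" "\<And>y. y \<ge> 0 \<Longrightarrow> \<bar>y - s2\<bar> < d4 \<Longrightarrow> \<bar>g2 y - g2 s2\<bar> < \<eta>"
    using cont_delta[OF c(4) ts(3) eta] by auto
  define d where "d = min (min (min d1 d2) (min d3 d4)) \<eta>"
  have d: "d > 0" using d1 d2 d3 d4 eta by (simp add: d_def)
  obtain n where n: "(1/2::real)^n < d" "max t (max s1 s2) \<le> real n"
    using choose_n[OF d, of "max t (max s1 s2)"] by blast
  define t' where "t' = up n t"
  define u1 where "u1 = up n s1"
  define u2 where "u2 = up n s2"
  have ct: "t \<le> t'" "t' < t + d" using up_props[OF ts(1), of n] n unfolding t'_def by auto
  have cu1: "s1 \<le> u1" "u1 < s1 + d" using up_props[OF ts(2), of n] n unfolding u1_def by auto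
  have cu2: "s2 \<le> u2" "u2 < s2 + d" using up_props[OF ts(3), of n] n unfolding u2_def by auto
  have dd: "d \<le> d1" "d \<le> d2" "d \<le> d3" "d \<le> d4" by (simp_all add: d_def)
  have at1: "\<bar>t' - t\<bar> < d1" "\<bar>t' - t\<bar> < d3" using ct dd by (subst abs_of_nonneg, linarith, linarith)+
  have au1: "\<bar>u1 - s1\<bar> < d2" using cu1 dd by (subst abs_of_nonneg, linarith, linarith)
  have au2: "\<bar>u2 - s2\<bar> < d4" using cu2 dd by (subst abs_of_nonneg, linarith, linarith)
  have F1: "\<bar>f1 t' - f1 t\<bar> < \<eta>" by (rule d1(2)) (use ct ts at1 in linarith)+
  have G1: "\<bar>g1 u1 - g1 s1\<bar> < \<eta>" by (rule d2(2)) (use cu1 ts au1 in linarith)+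
  have F2: "\<bar>f2 t' - f2 t\<bar> < \<eta>" by (rule d3(2)) (use ct ts at1 in linarith)+
  have G2: "\<bar>g2 u2 - g2 s2\<bar> < \<eta>" by (rule d4(2)) (use cu2 ts au2 in linarith)+
  have "d \<le> \<eta>" by (simp add: d_def)
  then have dt: "t' - t < \<eta>" "u1 - s1 < \<eta>" "u2 - s2 < \<eta>" using ct cu1 cu2 by linarith+
  have h1: "\<gamma>1 * (g1 u1 - u1) \<ge> \<gamma>1 * (g1 s1 - s1) - \<gamma>1 * (2 * \<eta>)"
  proof -
    have "g1 u1 - u1 \<ge> (g1 s1 - s1) - 2 * \<eta>" using G1 dt by linarith
    then have "\<gamma>1 * (g1 u1 - u1) \<ge> \<gamma>1 * ((g1 s1 - s1) - 2 * \<eta>)" using gam by (intro mult_left_mono) auto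
    then show ?thesis by (simp add: algebra_simps)
  qed
  have "\<gamma>1 * (2 * \<eta>) \<le> 2 * (2 * \<eta>)" using gam eta by (intro mult_right_mono) auto
  then have h1': "\<gamma>1 * (2 * \<eta>) \<le> 4 * \<eta>" by simp
  have h2: "\<gamma>2 * (g2 u2 - a * u2) \<ge> \<gamma>2 * (g2 s2 - a * s2) - \<gamma>2 * (\<eta> + a * \<eta>)"
  proof -
    have "a * u2 - a * s2 \<le> a * \<eta>" using dt a by (simp add: right_diff_distrib[symmetric])
    then have "g2 u2 - a * u2 \<ge> (g2 s2 - a * s2) - (\<eta> + a * \<eta>)" using G2 by linarith
    then have "\<gamma>2 * (g2 u2 - a * u2) \<ge> \<gamma>2 * ((g2 s2 - a * s2) - (\<eta> + a * \<eta>))" using gam by (intro mult_left_mono) auto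
    then show ?thesis by (simp add: algebra_simps)
  qed
  have h2': "\<gamma>2 * (\<eta> + a * \<eta>) \<le> 2 * (\<eta> + a * \<eta>)" using gam eta a by (intro mult_right_mono) auto
  have at: "a * t' - a * t \<le> a * \<eta>" using dt a by (simp add: right_diff_distrib[symmetric])
  have F1': "f1 t' - f1 t > - \<eta>" using F1 by (simp add: abs_less_iff)
  have F2': "f2 t' - f2 t > - \<eta>" using F2 by (simp add: abs_less_iff)
  have h2'': "\<gamma>2 * (\<eta> + a * \<eta>) \<le> 2 * \<eta> + 2 * (a * \<eta>)" using h2' by (simp add: algebra_simps)
  have Q1: "f1 t' - t' + \<gamma>1 * (g1 u1 - u1) > x1"
    using h1 h1' F1' dt(1) eta1(1) e1_def aeta eta by linarith
  have Q2: "f2 t' - a * t' + \<gamma>2 * (g2 u2 - a * u2) > x2"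
    using h2 h2'' F2' at eta1(2) e2_def aeta eta by linarith
  have idx: "nat \<lceil>t * 2^n\<rceil> \<le> n * 2^n" "nat \<lceil>s1 * 2^n\<rceil> \<le> n * 2^n" "nat \<lceil>s2 * 2^n\<rceil> \<le> n * 2^n"
    using n ts by (auto intro!: up_idx)
  define k1 where "k1 = nat \<lceil>t * 2^n\<rceil>"
  define k2 where "k2 = nat \<lceil>s1 * 2^n\<rceil>"
  define k3 where "k3 = nat \<lceil>s2 * 2^n\<rceil>"
  have tt: "t' = real k1 / 2^n" "u1 = real k2 / 2^n" "u2 = real k3 / 2^n"
    by (simp_all add: t'_def u1_def u2_def up_def k1_def k2_def k3_def)
  show ?thesis
    apply (rule exI[of _ n])
    apply (rule exI[of _ k1], rule conjI, unfold k1_def, rule idx(1))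
    apply (rule exI[of _ k2], rule conjI, unfold k2_def, rule idx(2))
    apply (rule exI[of _ k3], rule conjI, unfold k3_def, rule idx(3))
    using Q1 Q2 unfolding tt k1_def k2_def k3_def by simp
qed

lemma pair_exp_int:
  fixes X1 X2 a :: real assumes a: "a > 0"
  shows "(\<integral>\<^sup>+x. (if fst x \<le> X1 \<and> snd x \<le> X2 then ennreal (exp (fst x + a * snd x)) else 0) \<partial>lborel)
     = ennreal (exp X1) * ennreal (exp (a * X2) / a)"
proof -
  have "(\<integral>\<^sup>+x. (if fst x \<le> X1 \<and> snd x \<le> X2 then ennreal (exp (fst x + a * snd x)) else 0) \<partial>lborel)
      = (\<integral>\<^sup>+x. (if fst x \<le> X1 \<and> snd x \<le> X2 then ennreal (exp (fst x + a * snd x)) else 0) \<partial>(lborel \<Otimes>\<^sub>M lborel))"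
    by (simp add: lborel_prod)
  also have "\<dots> = (\<integral>\<^sup>+x1. \<integral>\<^sup>+x2. (if x1 \<le> X1 \<and> x2 \<le> X2 then ennreal (exp (x1 + a * x2)) else 0) \<partial>lborel \<partial>lborel)"
    by (subst lborel.nn_integral_fst[symmetric]) (measurable, simp only: fst_conv snd_conv)
  also have "\<dots> = (\<integral>\<^sup>+x1. (ennreal (exp x1) * indicator {..X1} x1) * (\<integral>\<^sup>+x2. ennreal (exp (a * x2)) * indicator {..X2} x2 \<partial>lborel) \<partial>lborel)"
  proof (intro nn_integral_cong)
    fix x1 :: real
    have "(\<integral>\<^sup>+x2. (if x1 \<le> X1 \<and> x2 \<le> X2 then ennreal (exp (x1 + a * x2)) else 0) \<partial>lborel)
        = (\<integral>\<^sup>+x2. (ennreal (exp x1) * indicator {..X1} x1) * (ennreal (exp (a * x2)) * indicator {..X2} x2) \<partial>lborel)"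
      by (intro nn_integral_cong) (simp add: indicator_def exp_add ennreal_mult')
    also have "\<dots> = (ennreal (exp x1) * indicator {..X1} x1) * (\<integral>\<^sup>+x2. ennreal (exp (a * x2)) * indicator {..X2} x2 \<partial>lborel)"
      by (rule nn_integral_cmult) measurable
    finally show "(\<integral>\<^sup>+x2. (if x1 \<le> X1 \<and> x2 \<le> X2 then ennreal (exp (x1 + a * x2)) else 0) \<partial>lborel) = \<dots>" .
  qed
  also have "\<dots> = (\<integral>\<^sup>+x1. ennreal (exp x1) * indicator {..X1} x1 \<partial>lborel) * (\<integral>\<^sup>+x2. ennreal (exp (a * x2)) * indicator {..X2} x2 \<partial>lborel)"
    by (rule nn_integral_multc) measurable
  also have "\<dots> = ennreal (exp X1) * ennreal (exp (a * X2) / a)"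
    using exp_head_int[of 1 X1] exp_head_int[OF a, of X2] by simp
  finally show ?thesis .
qed

lemma prod4: "(\<Prod>i<(4::nat). f i) = f 0 * f 1 * f 2 * (f 3 :: 'b::comm_monoid_mult)"
  by (simp add: eval_nat_numeral mult.assoc)

theorem mainTheorem2:
  fixes M :: "'a measure"
    and B1 B2 B1s B2s :: "real \<Rightarrow> 'a \<Rightarrow> real"
    and \<gamma>1 \<gamma>2 a :: real
  assumes "std_BM M B1" and "std_BM M B2" and "std_BM M B1s" and "std_BM M B2s"
    and "indep_processes M [B1, B2, B1s, B2s]"
    and "0 \<le> \<gamma>1" and "\<gamma>1 < 2" and "0 \<le> \<gamma>2" and "\<gamma>2 < 2"
    and "0 < a"
  defines "E \<equiv> \<lambda>(x1::real, x2::real). {\<omega> \<in> space M. \<exists>t\<ge>0. \<exists>s1\<ge>0. \<exists>s2\<ge>0.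
              B1s t \<omega> - t + \<gamma>1 * (B1 s1 \<omega> - s1) > x1 \<and>
              B2s t \<omega> - a * t + \<gamma>2 * (B2 s2 \<omega> - a * s2) > x2}"
  shows "(\<forall>x. E x \<in> sets M) \<and>
         (\<integral>\<^sup>+ x. ennreal (measure M (E x) * exp (fst x + a * snd x)) \<partial>lborel)
           \<le> ennreal (16 / (a * (2 - \<gamma>1) * (2 - \<gamma>2)))"
proof -
  note BM = assms(1-4)
  note g = assms(6-10)
  interpret prob_space M using BM(1) by (simp add: std_BM_def)
  define dy where "dy n k = real k / 2^n" for n k :: nat
  have dy0: "0 \<le> dy n k" for n k by (simp add: dy_def)
  have [measurable]: "B1 (dy n k) \<in> borel_measurable M" "B2 (dy n k) \<in> borel_measurable M"
    "B1s (dy n k) \<in> borel_measurable M" "B2s (dy n k) \<in> borel_measurable M" for n k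
    using BM dy0 by (auto intro: std_BM_rv)
  define P where "P x \<omega> t s1 s2 \<longleftrightarrow> B1s t \<omega> - t + \<gamma>1 * (B1 s1 \<omega> - s1) > fst x \<and>
              B2s t \<omega> - a * t + \<gamma>2 * (B2 s2 \<omega> - a * s2) > snd x" for x :: "real \<times> real" and \<omega> t s1 s2
  define E' where "E' n x = {\<omega>\<in>space M. \<exists>k1\<in>{..n*2^n}. \<exists>k2\<in>{..n*2^n}. \<exists>k3\<in>{..n*2^n}.
       P x \<omega> (dy n k1) (dy n k2) (dy n k3)}" for n x
  have Ex: "E x = {\<omega>\<in>space M. \<exists>t\<ge>0. \<exists>s1\<ge>0. \<exists>s2\<ge>0. P x \<omega> t s1 s2}" for x
    by (cases x) (simp add: E_def P_def)
  have E'sets[measurable]: "E' n x \<in> sets M" for n x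
    unfolding E'_def P_def by measurable
  have Eunion: "E x = (\<Union>n. E' n x)" for x
  proof
    show "(\<Union>n. E' n x) \<subseteq> E x"
      unfolding Ex E'_def using dy0 by blast
  next
    show "E x \<subseteq> (\<Union>n. E' n x)"
    proof
      fix \<omega> assume "\<omega> \<in> E x"
      then obtain t s1 s2 where w: "\<omega> \<in> space M" "t \<ge> 0" "s1 \<ge> 0" "s2 \<ge> 0" "P x \<omega> t s1 s2"
        unfolding Ex by auto
      have c: "continuous_on {0..} (\<lambda>t. B t \<omega>)" if "std_BM M B" for B
        using that w(1) unfolding std_BM_def by auto
      have P1: "B1s t \<omega> - t + \<gamma>1 * (B1 s1 \<omega> - s1) > fst x"
        and P2: "B2s t \<omega> - a * t + \<gamma>2 * (B2 s2 \<omega> - a * s2) > snd x"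
        using w(5) unfolding P_def by auto
      obtain n k1 k2 k3 where k: "k1 \<le> n*2^n" "k2 \<le> n*2^n" "k3 \<le> n*2^n"
        "B1s (real k1/2^n) \<omega> - real k1/2^n + \<gamma>1 * (B1 (real k2/2^n) \<omega> - real k2/2^n) > fst x"
        "B2s (real k1/2^n) \<omega> - a * (real k1/2^n) + \<gamma>2 * (B2 (real k3/2^n) \<omega> - a * (real k3/2^n)) > snd x"
        using density[OF c[OF BM(3)] c[OF BM(1)] c[OF BM(4)] c[OF BM(2)], of \<gamma>1 \<gamma>2 a t s1 s2 "fst x" "snd x"]
          g w P1 P2 by auto
      then have "\<omega> \<in> E' n x"
        unfolding E'_def P_def dy_def using w(1) by blast
      then show "\<omega> \<in> (\<Union>n. E' n x)" by blast
    qed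
  qed
  have Esets: "E x \<in> sets M" for x
    unfolding Eunion by measurable
  have incE': "E' n x \<subseteq> E' (Suc n) x" for n x
  proof
    fix \<omega> assume "\<omega> \<in> E' n x"
    then obtain k1 k2 k3 where k: "\<omega> \<in> space M" "k1 \<le> n*2^n" "k2 \<le> n*2^n" "k3 \<le> n*2^n"
      "P x \<omega> (dy n k1) (dy n k2) (dy n k3)" unfolding E'_def by auto
    have dd: "dy n k = dy (Suc n) (2*k)" for k by (simp add: dy_def)
    have kk: "2 * k \<le> Suc n * 2 ^ Suc n" if "k \<le> n * 2^n" for k
    proof -
      have "2 * k \<le> 2 * (n * 2^n)" using that by simp
      also have "\<dots> \<le> Suc n * 2 ^ Suc n" by simp
      finally show ?thesis .
    qed
    show "\<omega> \<in> E' (Suc n) x"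
      unfolding E'_def using k kk[of k1] kk[of k2] kk[of k3] unfolding dd by blast
  qed
  have inc: "incseq (\<lambda>n. E' n x)" for x
    using incE' by (intro incseq_SucI) auto
  have SUPE: "emeasure M (E x) = (SUP n. emeasure M (E' n x))" for x
    unfolding Eunion by (rule SUP_emeasure_incseq[symmetric]) (use inc in auto)
  interpret PS: pair_sigma_finite lborel M
    by (simp add: pair_sigma_finite_def lborel.sigma_finite_measure_axioms sigma_finite_measure_axioms)
  define u1 where "u1 = (\<lambda>p::(real \<times> real) \<times> 'a. fst (fst p))"
  define u2 where "u2 = (\<lambda>p::(real \<times> real) \<times> 'a. snd (fst p))"
  have fm: "fst \<in> borel_measurable (lborel :: (real \<times> real) measure)"
    "snd \<in> borel_measurable (lborel :: (real \<times> real) measure)"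
    by (simp_all add: measurable_lborel1 borel_measurable_continuous_onI continuous_on_fst continuous_on_snd continuous_on_id)
  have [measurable]: "u1 \<in> borel_measurable (lborel \<Otimes>\<^sub>M M)" "u2 \<in> borel_measurable (lborel \<Otimes>\<^sub>M M)"
    unfolding u1_def u2_def by (auto intro!: measurable_compose[OF measurable_fst] fm)
  have measx[measurable]: "(\<lambda>x. emeasure M (E' n x)) \<in> borel_measurable lborel" for n
  proof -
    define Q where "Q = {p \<in> space (lborel \<Otimes>\<^sub>M M). \<exists>k1\<in>{..n*2^n}. \<exists>k2\<in>{..n*2^n}. \<exists>k3\<in>{..n*2^n}.
       B1s (dy n k1) (snd p) - dy n k1 + \<gamma>1 * (B1 (dy n k2) (snd p) - dy n k2) > u1 p \<and>
       B2s (dy n k1) (snd p) - a * dy n k1 + \<gamma>2 * (B2 (dy n k3) (snd p) - a * dy n k3) > u2 p}"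
    have Q: "Q \<in> sets (lborel \<Otimes>\<^sub>M M)" unfolding Q_def by measurable
    have "Pair x -` Q = E' n x" for x by (auto simp: Q_def E'_def P_def u1_def u2_def space_pair_measure)
    then show ?thesis using measurable_emeasure_Pair[OF Q] by simp
  qed
  define X1 where "X1 n \<omega> = sgf 1 n (\<lambda>t. B1s t \<omega>) + \<gamma>1 * sgf 1 n (\<lambda>t. B1 t \<omega>)" for n \<omega>
  define X2 where "X2 n \<omega> = sgf a n (\<lambda>t. B2s t \<omega>) + \<gamma>2 * sgf a n (\<lambda>t. B2 t \<omega>)" for n \<omega>
  have X1m[measurable]: "X1 n \<in> borel_measurable M" for n unfolding X1_def using BM by measurable
  have X2m[measurable]: "X2 n \<in> borel_measurable M" for n unfolding X2_def using BM by measurable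
  have E'le: "emeasure M (E' n x) \<le> emeasure M {\<omega>\<in>space M. fst x \<le> X1 n \<omega> \<and> snd x \<le> X2 n \<omega>}" for n x
  proof (rule emeasure_mono)
    show "{\<omega>\<in>space M. fst x \<le> X1 n \<omega> \<and> snd x \<le> X2 n \<omega>} \<in> sets M" by measurable
    show "E' n x \<subseteq> {\<omega>\<in>space M. fst x \<le> X1 n \<omega> \<and> snd x \<le> X2 n \<omega>}"
    proof
      fix \<omega> assume "\<omega> \<in> E' n x"
      then obtain k1 k2 k3 where k: "\<omega> \<in> space M" "k1 \<le> n*2^n" "k2 \<le> n*2^n" "k3 \<le> n*2^n"
        "P x \<omega> (dy n k1) (dy n k2) (dy n k3)" unfolding E'_def by auto
      have s1: "B1s (dy n k1) \<omega> - 1 * dy n k1 \<le> sgf 1 n (\<lambda>t. B1s t \<omega>)"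
        using sgf_ge[OF k(2)] unfolding dy_def .
      have s2: "B1 (dy n k2) \<omega> - 1 * dy n k2 \<le> sgf 1 n (\<lambda>t. B1 t \<omega>)"
        using sgf_ge[OF k(3)] unfolding dy_def .
      have s3: "B2s (dy n k1) \<omega> - a * dy n k1 \<le> sgf a n (\<lambda>t. B2s t \<omega>)"
        using sgf_ge[OF k(2)] unfolding dy_def .
      have s4: "B2 (dy n k3) \<omega> - a * dy n k3 \<le> sgf a n (\<lambda>t. B2 t \<omega>)"
        using sgf_ge[OF k(4)] unfolding dy_def .
      have m1: "\<gamma>1 * (B1 (dy n k2) \<omega> - dy n k2) \<le> \<gamma>1 * sgf 1 n (\<lambda>t. B1 t \<omega>)"
        using s2 g by (intro mult_left_mono) auto
      have m2: "\<gamma>2 * (B2 (dy n k3) \<omega> - a * dy n k3) \<le> \<gamma>2 * sgf a n (\<lambda>t. B2 t \<omega>)"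
        using s4 g by (intro mult_left_mono) auto
      show "\<omega> \<in> {\<omega>\<in>space M. fst x \<le> X1 n \<omega> \<and> snd x \<le> X2 n \<omega>}"
        using k(1,5) s1 s3 m1 m2 unfolding P_def X1_def X2_def by auto
    qed
  qed
  define K where "K = 16 / (a * (2 - \<gamma>1) * (2 - \<gamma>2))"
  have main_n: "(\<integral>\<^sup>+x. emeasure M {\<omega>\<in>space M. fst x \<le> X1 n \<omega> \<and> snd x \<le> X2 n \<omega>} * ennreal (exp (fst x + a * snd x)) \<partial>lborel)
      \<le> ennreal K" for n
  proof -
    define h where "h p = (if u1 p \<le> X1 n (snd p) \<and> u2 p \<le> X2 n (snd p) then ennreal (exp (u1 p + a * u2 p)) else 0)" for p
    have hm: "h \<in> borel_measurable (lborel \<Otimes>\<^sub>M M)" unfolding h_def by measurable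
    have hm': "case_prod (\<lambda>x \<omega>. h (x, \<omega>)) \<in> borel_measurable (lborel \<Otimes>\<^sub>M M)" using hm by simp
    have "(\<integral>\<^sup>+x. emeasure M {\<omega>\<in>space M. fst x \<le> X1 n \<omega> \<and> snd x \<le> X2 n \<omega>} * ennreal (exp (fst x + a * snd x)) \<partial>lborel)
        = (\<integral>\<^sup>+x. \<integral>\<^sup>+\<omega>. h (x, \<omega>) \<partial>M \<partial>lborel)" (is "?L = _")
    proof (intro nn_integral_cong)
      fix x :: "real \<times> real"
      have "(\<integral>\<^sup>+\<omega>. h (x, \<omega>) \<partial>M) = (\<integral>\<^sup>+\<omega>. ennreal (exp (fst x + a * snd x)) * indicator {\<omega>\<in>space M. fst x \<le> X1 n \<omega> \<and> snd x \<le> X2 n \<omega>} \<omega> \<partial>M)"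
        unfolding h_def u1_def u2_def by (intro nn_integral_cong) (simp add: indicator_def)
      also have "\<dots> = ennreal (exp (fst x + a * snd x)) * emeasure M {\<omega>\<in>space M. fst x \<le> X1 n \<omega> \<and> snd x \<le> X2 n \<omega>}"
        by (rule nn_integral_cmult_indicator) measurable
      finally show "emeasure M {\<omega>\<in>space M. fst x \<le> X1 n \<omega> \<and> snd x \<le> X2 n \<omega>} * ennreal (exp (fst x + a * snd x)) = (\<integral>\<^sup>+\<omega>. h (x, \<omega>) \<partial>M)"
        by (simp add: mult.commute)
    qed
    also have "\<dots> = (\<integral>\<^sup>+\<omega>. \<integral>\<^sup>+x. h (x, \<omega>) \<partial>lborel \<partial>M)"
      by (rule PS.Fubini'[OF hm', symmetric])
    also have "\<dots> = (\<integral>\<^sup>+\<omega>. ennreal (exp (X1 n \<omega>)) * ennreal (exp (a * X2 n \<omega>) / a) \<partial>M)"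
    proof (intro nn_integral_cong)
      fix \<omega>
      have "(\<integral>\<^sup>+x. h (x, \<omega>) \<partial>lborel) = (\<integral>\<^sup>+x. (if fst x \<le> X1 n \<omega> \<and> snd x \<le> X2 n \<omega> then ennreal (exp (fst x + a * snd x)) else 0) \<partial>lborel)"
        unfolding h_def u1_def u2_def by (simp only: fst_conv snd_conv)
      also have "\<dots> = ennreal (exp (X1 n \<omega>)) * ennreal (exp (a * X2 n \<omega>) / a)"
        by (rule pair_exp_int[OF g(5)])
      finally show "(\<integral>\<^sup>+x. h (x, \<omega>) \<partial>lborel) = \<dots>" .
    qed
    finally have ch1: "?L = (\<integral>\<^sup>+\<omega>. ennreal (exp (X1 n \<omega>)) * ennreal (exp (a * X2 n \<omega>) / a) \<partial>M)" .
    define Xs where "Xs = [B1, B2, B1s, B2s]"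
    define th where "th i = (if i = 0 then \<gamma>1 else if i = 1 then a * \<gamma>2 else if i = 2 then 1 else a)" for i :: nat
    define mu where "mu i = (if i = 0 then 1 else if i = 1 then a else if i = 2 then 1 else a)" for i :: nat
    define Yf where "Yf i f = exp (th i * sgf (mu i) n f)" for i f
    define Y where "Y i \<omega> = Yf i (\<lambda>t. (Xs ! i) t \<omega>)" for i \<omega>
    have ind0: "indep_vars (\<lambda>_. PiM UNIV (\<lambda>_. borel)) (\<lambda>i \<omega>. \<lambda>t. (Xs ! i) t \<omega>) {..<4}"
    proof -
      have "length Xs = 4" by (simp add: Xs_def)
      then show ?thesis using assms(5) unfolding indep_processes_def Xs_def by (simp only:)
    qed
    have ind: "indep_vars (\<lambda>_. borel) Y {..<4}"
      unfolding Y_def[abs_def] by (rule indep_vars_compose2[OF ind0]) (simp add: Yf_def[abs_def])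
    have indE: "indep_vars (\<lambda>_. borel) (\<lambda>i \<omega>. ennreal (Y i \<omega>)) {..<4}"
      by (rule indep_vars_compose2[OF ind]) simp
    have prodY0: "(\<integral>\<^sup>+\<omega>. (\<Prod>i\<in>{..<4}. ennreal (Y i \<omega>)) \<partial>M) = (\<Prod>i\<in>{..<4}. \<integral>\<^sup>+\<omega>. Y i \<omega> \<partial>M)"
      by (rule indep_vars_nn_integral[OF finite_lessThan indE]) simp
    have prodY: "(\<integral>\<^sup>+\<omega>. ennreal (\<Prod>i\<in>{..<4}. Y i \<omega>) \<partial>M) = (\<Prod>i\<in>{..<4}. \<integral>\<^sup>+\<omega>. Y i \<omega> \<partial>M)"
      unfolding prodY0[symmetric] by (intro nn_integral_cong prod_ennreal[symmetric]) (simp add: Y_def Yf_def)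
    have eqY: "ennreal (exp (X1 n \<omega>)) * ennreal (exp (a * X2 n \<omega>) / a) = ennreal (1 / a) * ennreal (\<Prod>i\<in>{..<4}. Y i \<omega>)" for \<omega>
    proof -
      have "exp (X1 n \<omega>) * (exp (a * X2 n \<omega>) / a) = 1 / a * (\<Prod>i\<in>{..<4}. Y i \<omega>)"
        unfolding prod4 Y_def Yf_def th_def mu_def Xs_def X1_def X2_def
        using g(5) by (simp add: exp_add algebra_simps)
      then show ?thesis using g(5) by (simp add: ennreal_mult'[symmetric] ennreal_mult''[symmetric])
    qed
    have bnd: "(\<integral>\<^sup>+\<omega>. Y i \<omega> \<partial>M) \<le> ennreal (2 * mu i / (2 * mu i - th i))" if "i < 4" for i
    proof -
      have BMi: "std_BM M (Xs ! i)" using that BM unfolding Xs_def by (auto simp: less_Suc_eq numeral_eq_Suc)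
      have "mu i > 0" "0 \<le> th i" "th i < 2 * mu i"
        using g that by (auto simp: mu_def th_def)
      then show ?thesis unfolding Y_def Yf_def by (intro sgf_mgf[OF BMi])
    qed
    have "(\<integral>\<^sup>+\<omega>. ennreal (exp (X1 n \<omega>)) * ennreal (exp (a * X2 n \<omega>) / a) \<partial>M)
        = ennreal (1 / a) * (\<integral>\<^sup>+\<omega>. ennreal (\<Prod>i\<in>{..<4}. Y i \<omega>) \<partial>M)"
    proof -
      have Ym: "Y i \<in> borel_measurable M" if "i \<in> {..<4}" for i
        using ind that by (auto simp: indep_vars_def)
      have "(\<lambda>\<omega>. \<Prod>i\<in>{..<4}. Y i \<omega>) \<in> borel_measurable M"
        by (rule borel_measurable_prod) (rule Ym)
      then have "(\<lambda>\<omega>. ennreal (\<Prod>i\<in>{..<4}. Y i \<omega>)) \<in> borel_measurable M"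
        using measurable_compose[OF _ measurable_ennreal] by blast
      then show ?thesis unfolding eqY by (rule nn_integral_cmult)
    qed
    also have "\<dots> = ennreal (1 / a) * (\<Prod>i\<in>{..<4}. \<integral>\<^sup>+\<omega>. Y i \<omega> \<partial>M)"
      by (simp add: prodY)
    also have "\<dots> \<le> ennreal (1 / a) * (\<Prod>i\<in>{..<4}. ennreal (2 * mu i / (2 * mu i - th i)))"
    proof (intro mult_left_mono)
      show "(\<Prod>i\<in>{..<4}. \<integral>\<^sup>+\<omega>. Y i \<omega> \<partial>M) \<le> (\<Prod>i\<in>{..<4}. ennreal (2 * mu i / (2 * mu i - th i)))"
        unfolding prod4 by (intro mult_mono bnd) auto
    qed simp
    also have "\<dots> = ennreal (1 / a * (\<Prod>i\<in>{..<4}. 2 * mu i / (2 * mu i - th i)))"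
    proof -
      have nn: "0 \<le> 2 * mu i / (2 * mu i - th i)" if "i < 4" for i
        using g that by (auto simp: mu_def th_def)
      then have p: "(\<Prod>i\<in>{..<4}. ennreal (2 * mu i / (2 * mu i - th i))) = ennreal (\<Prod>i\<in>{..<4}. 2 * mu i / (2 * mu i - th i))"
        by (intro prod_ennreal) simp
      have "0 \<le> (\<Prod>i\<in>{..<4}. 2 * mu i / (2 * mu i - th i))" using nn by (intro prod_nonneg) simp
      then show ?thesis unfolding p using g(5) by (simp add: ennreal_mult''[symmetric])
    qed
    also have "1 / a * (\<Prod>i\<in>{..<4}. 2 * mu i / (2 * mu i - th i)) = K"
    proof -
      have "2 * a / (2 * a - a * \<gamma>2) = 2 / (2 - \<gamma>2)"
        using g by (simp add: field_simps)
      then show ?thesis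
        unfolding prod4 K_def mu_def th_def using g by (simp add: field_simps)
    qed
    finally show ?thesis using ch1 by simp
  qed
  have "(\<integral>\<^sup>+ x. ennreal (measure M (E x) * exp (fst x + a * snd x)) \<partial>lborel)
      = (\<integral>\<^sup>+ x. (SUP n. emeasure M (E' n x) * ennreal (exp (fst x + a * snd x))) \<partial>lborel)"
  proof (intro nn_integral_cong)
    fix x :: "real \<times> real"
    have "ennreal (measure M (E x) * exp (fst x + a * snd x)) = emeasure M (E x) * ennreal (exp (fst x + a * snd x))"
      by (simp add: ennreal_mult emeasure_eq_measure)
    also have "\<dots> = (SUP n. emeasure M (E' n x) * ennreal (exp (fst x + a * snd x)))"
      by (simp add: SUPE SUP_mult_right_ennreal)
    finally show "ennreal (measure M (E x) * exp (fst x + a * snd x)) = \<dots>" .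
  qed
  also have "\<dots> = (SUP n. (\<integral>\<^sup>+ x. emeasure M (E' n x) * ennreal (exp (fst x + a * snd x)) \<partial>lborel))"
  proof (rule nn_integral_monotone_convergence_SUP)
    show "incseq (\<lambda>n x. emeasure M (E' n x) * ennreal (exp (fst x + a * snd x)))"
      by (intro incseq_SucI le_funI mult_right_mono emeasure_mono incE') auto
    have ex: "(\<lambda>x::real\<times>real. exp (fst x + a * snd x)) \<in> borel_measurable lborel"
      by (simp add: measurable_lborel1, intro borel_measurable_continuous_onI continuous_intros)
    have ex2: "(\<lambda>x::real\<times>real. ennreal (exp (fst x + a * snd x))) \<in> borel_measurable lborel"
      using measurable_compose[OF ex measurable_ennreal] by (simp add: comp_def)
    show "(\<lambda>x. emeasure M (E' n x) * ennreal (exp (fst x + a * snd x))) \<in> borel_measurable lborel" for n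
      by (rule borel_measurable_times_ennreal[OF measx ex2])
  qed
  also have "\<dots> \<le> ennreal K"
  proof (rule SUP_least)
    fix n
    have "(\<integral>\<^sup>+ x. emeasure M (E' n x) * ennreal (exp (fst x + a * snd x)) \<partial>lborel)
       \<le> (\<integral>\<^sup>+x. emeasure M {\<omega>\<in>space M. fst x \<le> X1 n \<omega> \<and> snd x \<le> X2 n \<omega>} * ennreal (exp (fst x + a * snd x)) \<partial>lborel)"
      by (intro nn_integral_mono mult_right_mono E'le) auto
    also have "\<dots> \<le> ennreal K" by (rule main_n)
    finally show "(\<integral>\<^sup>+ x. emeasure M (E' n x) * ennreal (exp (fst x + a * snd x)) \<partial>lborel) \<le> ennreal K" .
  qed
  finally show ?thesis using Esets by (simp add: K_def)
qed

end
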